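(* Let $G$ be a finite group, $H\leq G$ of index $n$, $T=\{t_1=1,t_2,\ldots,t_n\}$ a right transversal to $H$ in $G$, and write $g=\mathsf{H}(g)\mathsf{T}(g)$ with $\mathsf{H}(g)\in H$, $\mathsf{T}(g)\in T$ for $g\in G$. Let $\chi$ be a linear character of $H$, $\chi^+$ its extension to $G$ by $0$ outside $H$, $\chi_{\mathsf{H}}(g)=\chi(\mathsf{H}(g))$, and $\rho(g)=[\chi^+(t_igt_k^{-1})]_{i,k}$ the induced monomial representation. Let $G$ act on $T\times T$ by $(s,t)\cdot g=(\mathsf{T}(sg),\mathsf{T}(tg))$; its orbits are called orbitals. An orbital $\mathcal{O}$ containing $(1,t)$ is called orientable if for all $(u,v)\in\mathcal{O}$ and all $g,k\in Hu\cap t^{-1}Hv$ one has $\chi_{\mathsf{H}}(g)^{-1}\chi_{\mathsf{H}}(tg)=\chi_{\mathsf{H}}(k)^{-1}\chi_{\mathsf{H}}(tk)$. For an orientable orbital $\mathcal{O}$ containing $(1,t)$, the orbital matrix $M_{\mathcal{O}}$ is the $n\times n$ matrix with rows and columns labelled by $T$ whose entry in position $(\mathsf{T}(g),\mathsf{T}(tg))$ equals $\chi_{\mathsf{H}}(g)^{-1}\chi_{\mathsf{H}}(tg)$ for every $g\in G$, and whose entries in positions not in $\mathcal{O}$ are $0$. Then the orbital matrices $M_{\mathcal{O}}$, as $\mathcal{O}$ ranges over the orientable orbitals, form a $\mathbb{C}$-basis of the centraliser algebra $\mathrm{C}(\rho)=\{X : X\rho(g)=\rho(g)X\ \forall g\in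 G\}$.
   Context: A right transversal $T$ to $H$ in $G$ is a set such that every $g\in G$ factorises uniquely as $g=ht$ with $h\in H$, $t\in T$. Orientability guarantees that $M_{\mathcal{O}}$ is well defined; each orbital matrix is determined up to a nonzero scalar by $\mathcal{O}$. *)

theory Defs
  imports "HOL-Algebra.Algebra" "HOL-Complex_Analysis.Complex_Analysis"
begin

definition right_transversal :: "('a, 'b) monoid_scheme \<Rightarrow> 'a set \<Rightarrow> 'a set \<Rightarrow> bool" where
  "right_transversal G H T \<longleftrightarrow> T \<subseteq> carrier G \<and>
     (\<forall>g\<in>carrier G. \<exists>!p. fst p \<in> H \<and> snd p \<in> T \<and> g = fst p \<otimes>\<^bsub>G\<^esub> snd p)"

definition Tpart :: "('a, 'b) monoid_scheme \<Rightarrow> 'a set \<Rightarrow> 'a set \<Rightarrow> 'a \<Rightarrow> 'a" where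
  "Tpart G H T g = (THE t. t \<in> T \<and> (\<exists>h\<in>H. g = h \<otimes>\<^bsub>G\<^esub> t))"

definition Hpart :: "('a, 'b) monoid_scheme \<Rightarrow> 'a set \<Rightarrow> 'a set \<Rightarrow> 'a \<Rightarrow> 'a" where
  "Hpart G H T g = (THE h. h \<in> H \<and> (\<exists>t\<in>T. g = h \<otimes>\<^bsub>G\<^esub> t))"

definition linear_character :: "('a, 'b) monoid_scheme \<Rightarrow> 'a set \<Rightarrow> ('a \<Rightarrow> complex) \<Rightarrow> bool" where
  "linear_character G H chi \<longleftrightarrow> (\<forall>h\<in>H. chi h \<noteq> 0) \<and>
     (\<forall>h\<in>H. \<forall>k\<in>H. chi (h \<otimes>\<^bsub>G\<^esub> k) = chi h * chi k)"

definition chi_plus :: "'a set \<Rightarrow> ('a \<Rightarrow> complex) \<Rightarrow> 'a \<Rightarrow> complex" where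
  "chi_plus H chi g = (if g \<in> H then chi g else 0)"

definition chi_H :: "('a, 'b) monoid_scheme \<Rightarrow> 'a set \<Rightarrow> 'a set \<Rightarrow> ('a \<Rightarrow> complex) \<Rightarrow> 'a \<Rightarrow> complex" where
  "chi_H G H T chi g = chi (Hpart G H T g)"

definition rho :: "('a, 'b) monoid_scheme \<Rightarrow> 'a set \<Rightarrow> ('a \<Rightarrow> complex) \<Rightarrow> 'a \<Rightarrow> 'a \<Rightarrow> 'a \<Rightarrow> complex" where
  "rho G H chi g s u = chi_plus H chi (s \<otimes>\<^bsub>G\<^esub> g \<otimes>\<^bsub>G\<^esub> inv\<^bsub>G\<^esub> u)"

definition orbital_act :: "('a, 'b) monoid_scheme \<Rightarrow> 'a set \<Rightarrow> 'a set \<Rightarrow> 'a \<times> 'a \<Rightarrow> 'a \<Rightarrow> 'a \<times> 'a" where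
  "orbital_act G H T p g = (Tpart G H T (fst p \<otimes>\<^bsub>G\<^esub> g), Tpart G H T (snd p \<otimes>\<^bsub>G\<^esub> g))"

definition orbitals :: "('a, 'b) monoid_scheme \<Rightarrow> 'a set \<Rightarrow> 'a set \<Rightarrow> ('a \<times> 'a) set set" where
  "orbitals G H T = {orbital_act G H T p ` carrier G | p. p \<in> T \<times> T}"

definition orientable :: "('a, 'b) monoid_scheme \<Rightarrow> 'a set \<Rightarrow> 'a set \<Rightarrow> ('a \<Rightarrow> complex)
    \<Rightarrow> ('a \<times> 'a) set \<Rightarrow> 'a \<Rightarrow> bool" where
  "orientable G H T chi Orb t \<longleftrightarrow>
     (\<forall>(u, v)\<in>Orb. \<forall>g\<in>r_coset G H u \<inter> l_coset G (inv\<^bsub>G\<^esub> t) (r_coset G H v).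
        \<forall>k\<in>r_coset G H u \<inter> l_coset G (inv\<^bsub>G\<^esub> t) (r_coset G H v).
          inverse (chi_H G H T chi g) * chi_H G H T chi (t \<otimes>\<^bsub>G\<^esub> g)
        = inverse (chi_H G H T chi k) * chi_H G H T chi (t \<otimes>\<^bsub>G\<^esub> k))"

definition orbital_matrix :: "('a, 'b) monoid_scheme \<Rightarrow> 'a set \<Rightarrow> 'a set \<Rightarrow> ('a \<Rightarrow> complex)
    \<Rightarrow> ('a \<times> 'a) set \<Rightarrow> 'a \<Rightarrow> 'a \<Rightarrow> 'a \<Rightarrow> complex" where
  "orbital_matrix G H T chi Orb t s u =
     (if (s, u) \<in> Orb then
        (let g = (SOME g. g \<in> carrier G \<and> Tpart G H T g = s \<and> Tpart G H T (t \<otimes>\<^bsub>G\<^esub> g) = u)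
         in inverse (chi_H G H T chi g) * chi_H G H T chi (t \<otimes>\<^bsub>G\<^esub> g))
      else 0)"

definition centraliser :: "('a, 'b) monoid_scheme \<Rightarrow> 'a set \<Rightarrow> 'a set \<Rightarrow> ('a \<Rightarrow> complex)
    \<Rightarrow> ('a \<Rightarrow> 'a \<Rightarrow> complex) set" where
  "centraliser G H T chi = {Xm. (\<forall>s u. (s, u) \<notin> T \<times> T \<longrightarrow> Xm s u = 0) \<and>
     (\<forall>g\<in>carrier G. \<forall>s\<in>T. \<forall>u\<in>T.
        (\<Sum>r\<in>T. Xm s r * rho G H chi g r u) = (\<Sum>r\<in>T. rho G H chi g s r * Xm r u))}"

end

theory Submission
  imports Defs
begin


locale tsetup = group G for G (structure) +
  fixes H T :: "'a set" and chi :: "'a \<Rightarrow> complex"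
  assumes fin: "finite (carrier G)" and sub: "subgroup H G"
    and rt: "right_transversal G H T" and oneT: "\<one> \<in> T"
    and lc: "linear_character G H chi"
begin

abbreviation "TP \<equiv> Tpart G H T"
abbreviation "HP \<equiv> Hpart G H T"

lemma T_sub: "T \<subseteq> carrier G" using rt unfolding right_transversal_def by blast
lemma T_fin: "finite T" using T_sub fin finite_subset by blast
lemma H_sub: "H \<subseteq> carrier G" by (rule subgroup.subset[OF sub])
lemma Hc: "h \<in> H \<Longrightarrow> h \<in> carrier G" using H_sub by blast
lemma Tc: "t \<in> T \<Longrightarrow> t \<in> carrier G" using T_sub by blast
lemma H_one: "\<one> \<in> H" by (rule subgroup.one_closed[OF sub])
lemma H_mult: "h \<in> H \<Longrightarrow> k \<in> H \<Longrightarrow> h \<otimes> k \<in> H" by (rule subgroup.m_closed[OF sub])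

lemma decomp_uniq:
  assumes "h1 \<in> H" "h2 \<in> H" "t1 \<in> T" "t2 \<in> T" "h1 \<otimes> t1 = h2 \<otimes> t2"
  shows "h1 = h2 \<and> t1 = t2"
proof -
  have g: "h1 \<otimes> t1 \<in> carrier G" using assms Hc Tc by blast
  then have "\<exists>!p. fst p \<in> H \<and> snd p \<in> T \<and> h1 \<otimes> t1 = fst p \<otimes> snd p"
    using rt unfolding right_transversal_def by blast
  moreover have "fst (h1, t1) \<in> H \<and> snd (h1, t1) \<in> T \<and> h1 \<otimes> t1 = fst (h1, t1) \<otimes> snd (h1, t1)"
    using assms by simp
  moreover have "fst (h2, t2) \<in> H \<and> snd (h2, t2) \<in> T \<and> h1 \<otimes> t1 = fst (h2, t2) \<otimes> snd (h2, t2)"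
    using assms by simp
  ultimately have "(h1, t1) = (h2, t2)" by blast
  then show ?thesis by simp
qed

lemma decomp_ex:
  assumes "g \<in> carrier G" shows "\<exists>h\<in>H. \<exists>t\<in>T. g = h \<otimes> t"
proof -
  have "\<exists>!p. fst p \<in> H \<and> snd p \<in> T \<and> g = fst p \<otimes> snd p"
    using rt assms unfolding right_transversal_def by blast
  then show ?thesis by blast
qed

lemma TP_eq: assumes "h \<in> H" "t \<in> T" "g = h \<otimes> t" shows "TP g = t"
  unfolding Tpart_def
proof (rule the_equality)
  show "t \<in> T \<and> (\<exists>h\<in>H. g = h \<otimes> t)" using assms by blast
next
  fix t' assume a: "t' \<in> T \<and> (\<exists>h\<in>H. g = h \<otimes> t')"
  then obtain h' where h': "h' \<in> H" "g = h' \<otimes> t'" by blast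
  have "h' \<otimes> t' = h \<otimes> t" using h'(2) assms(3) by simp
  then show "t' = t" using decomp_uniq[OF h'(1) assms(1) conjunct1[OF a] assms(2)] by simp
qed

lemma HP_eq: assumes "h \<in> H" "t \<in> T" "g = h \<otimes> t" shows "HP g = h"
  unfolding Hpart_def
proof (rule the_equality)
  show "h \<in> H \<and> (\<exists>t\<in>T. g = h \<otimes> t)" using assms by blast
next
  fix h' assume a: "h' \<in> H \<and> (\<exists>t\<in>T. g = h' \<otimes> t)"
  then obtain t' where t': "t' \<in> T" "g = h' \<otimes> t'" by blast
  have "h' \<otimes> t' = h \<otimes> t" using t'(2) assms(3) by simp
  then show "h' = h" using decomp_uniq[OF conjunct1[OF a] assms(1) t'(1) assms(2)] by simp
qed

lemma decomp_all: assumes "g \<in> carrier G" shows "TP g \<in> T \<and> HP g \<in> H \<and> g = HP g \<otimes> TP g"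
proof -
  obtain h t where ht: "h \<in> H" "t \<in> T" "g = h \<otimes> t" using decomp_ex[OF assms] by blast
  have 1: "TP g = t" by (rule TP_eq[OF ht])
  have 2: "HP g = h" by (rule HP_eq[OF ht])
  show ?thesis unfolding 1 2 using ht by simp
qed
lemma TP_in: "g \<in> carrier G \<Longrightarrow> TP g \<in> T"
  by (rule conjunct1[OF decomp_all])
lemma HP_in: "g \<in> carrier G \<Longrightarrow> HP g \<in> H"
  by (rule conjunct1[OF conjunct2[OF decomp_all]])
lemma decomp: "g \<in> carrier G \<Longrightarrow> g = HP g \<otimes> TP g"
  by (rule conjunct2[OF conjunct2[OF decomp_all]])
lemma TPc: "g \<in> carrier G \<Longrightarrow> TP g \<in> carrier G" using TP_in Tc by blast
lemma HPc: "g \<in> carrier G \<Longrightarrow> HP g \<in> carrier G" using HP_in Hc by blast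

lemma TP_T: "t \<in> T \<Longrightarrow> TP t = t" using TP_eq[of \<one> t t] H_one Tc by simp
lemma HP_T: "t \<in> T \<Longrightarrow> HP t = \<one>" using HP_eq[of \<one> t t] H_one Tc by simp

lemma TP_mult_gen:
  assumes x: "x \<in> carrier G" and g: "g \<in> carrier G"
  shows "TP (TP x \<otimes> g) = TP (x \<otimes> g) \<and> HP (x \<otimes> g) = HP x \<otimes> HP (TP x \<otimes> g)"
proof -
  have c: "TP x \<otimes> g \<in> carrier G" using x g TPc by blast
  have "x \<otimes> g = HP x \<otimes> TP x \<otimes> g" using decomp[OF x] by (rule arg_cong[where f="\<lambda>y. y \<otimes> g"])
  also have "\<dots> = HP x \<otimes> (TP x \<otimes> g)" using x g HPc TPc by (simp add: m_assoc)
  also have "\<dots> = HP x \<otimes> (HP (TP x \<otimes> g) \<otimes> TP (TP x \<otimes> g))" using decomp[OF c] by (rule arg_cong[where f="\<lambda>y. HP x \<otimes> y"])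
  also have "\<dots> = (HP x \<otimes> HP (TP x \<otimes> g)) \<otimes> TP (TP x \<otimes> g)" using x c HPc TPc by (simp add: m_assoc)
  finally have e: "x \<otimes> g = (HP x \<otimes> HP (TP x \<otimes> g)) \<otimes> TP (TP x \<otimes> g)" .
  have hh: "HP x \<otimes> HP (TP x \<otimes> g) \<in> H" using H_mult HP_in x c by blast
  have 1: "TP (x \<otimes> g) = TP (TP x \<otimes> g)" by (rule TP_eq[OF hh TP_in[OF c] e])
  have 2: "HP (x \<otimes> g) = HP x \<otimes> HP (TP x \<otimes> g)" by (rule HP_eq[OF hh TP_in[OF c] e])
  show ?thesis by (rule conjI[OF 1[symmetric] 2])
qed

lemma TP_mult: "x \<in> carrier G \<Longrightarrow> g \<in> carrier G \<Longrightarrow> TP (TP x \<otimes> g) = TP (x \<otimes> g)"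
  using TP_mult_gen by blast
lemma HP_mult: "x \<in> carrier G \<Longrightarrow> g \<in> carrier G \<Longrightarrow> HP (x \<otimes> g) = HP x \<otimes> HP (TP x \<otimes> g)"
  using TP_mult_gen by blast

lemma TP_left: assumes "h \<in> H" "g \<in> carrier G" shows "TP (h \<otimes> g) = TP g"
proof -
  have "h \<otimes> g = h \<otimes> (HP g \<otimes> TP g)" using decomp[OF assms(2)] by (rule arg_cong[where f="\<lambda>y. h \<otimes> y"])
  also have "\<dots> = (h \<otimes> HP g) \<otimes> TP g" using assms Hc HPc TPc by (simp add: m_assoc)
  finally have "h \<otimes> g = (h \<otimes> HP g) \<otimes> TP g" .
  then show ?thesis by (rule TP_eq[OF H_mult[OF assms(1) HP_in[OF assms(2)]] TP_in[OF assms(2)]])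
qed

lemma chi_mult: "h \<in> H \<Longrightarrow> k \<in> H \<Longrightarrow> chi (h \<otimes> k) = chi h * chi k"
  using lc unfolding linear_character_def by blast
lemma chi_nz: "h \<in> H \<Longrightarrow> chi h \<noteq> 0"
  using lc unfolding linear_character_def by blast
lemma chi_one: "chi \<one> = 1"
proof -
  have "chi \<one> = chi \<one> * chi \<one>" using chi_mult[OF H_one H_one] by simp
  then show ?thesis using chi_nz[OF H_one] by (simp add: mult_cancel_left1)
qed

lemma chiHP_mult: "x \<in> carrier G \<Longrightarrow> g \<in> carrier G \<Longrightarrow>
   chi (HP (x \<otimes> g)) = chi (HP x) * chi (HP (TP x \<otimes> g))"
proof -
  assume x: "x \<in> carrier G" and g: "g \<in> carrier G"
  have c: "TP x \<otimes> g \<in> carrier G" using x g TPc by blast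
  have "chi (HP (x \<otimes> g)) = chi (HP x \<otimes> HP (TP x \<otimes> g))" by (simp only: HP_mult[OF x g])
  then show ?thesis using chi_mult[OF HP_in[OF x] HP_in[OF c]] by simp
qed

lemma rho_val:
  assumes s: "s \<in> T" and u: "u \<in> T" and g: "g \<in> carrier G"
  shows "rho G H chi g s u = (if u = TP (s \<otimes> g) then chi (HP (s \<otimes> g)) else 0)"
proof -
  have sg: "s \<otimes> g \<in> carrier G" using s g Tc by blast
  show ?thesis
  proof (cases "u = TP (s \<otimes> g)")
    case True
    have "s \<otimes> g \<otimes> inv u = HP (s \<otimes> g) \<otimes> TP (s \<otimes> g) \<otimes> inv u" using decomp[OF sg] by (rule arg_cong[where f="\<lambda>y. y \<otimes> inv u"])
    also have "\<dots> = HP (s \<otimes> g) \<otimes> u \<otimes> inv u" using True by simp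
    also have "\<dots> = HP (s \<otimes> g)" using sg u HPc Tc by (simp add: m_assoc)
    finally show ?thesis using True HP_in sg unfolding rho_def chi_plus_def by simp
  next
    case False
    have "s \<otimes> g \<otimes> inv u \<notin> H"
    proof
      assume h: "s \<otimes> g \<otimes> inv u \<in> H"
      have "s \<otimes> g = (s \<otimes> g \<otimes> inv u) \<otimes> u" using sg u Tc by (simp add: m_assoc)
      then have "TP (s \<otimes> g) = u" by (rule TP_eq[OF h u])
      then show False using False by simp
    qed
    then show ?thesis using False unfolding rho_def chi_plus_def by simp
  qed
qed

lemma col_unique:
  assumes r: "r \<in> T" and u: "u \<in> T" and g: "g \<in> carrier G"
  shows "u = TP (r \<otimes> g) \<longleftrightarrow> r = TP (u \<otimes> inv g)"
proof
  assume e: "u = TP (r \<otimes> g)"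
  have rg: "r \<otimes> g \<in> carrier G" using r g Tc by blast
  have "r = (r \<otimes> g) \<otimes> inv g" using r g Tc by (simp add: m_assoc)
  also have "\<dots> = HP (r \<otimes> g) \<otimes> TP (r \<otimes> g) \<otimes> inv g" using decomp[OF rg] by (rule arg_cong[where f="\<lambda>y. y \<otimes> inv g"])
  also have "\<dots> = HP (r \<otimes> g) \<otimes> (u \<otimes> inv g)" using e rg g u Tc HPc m_assoc by simp
  finally have "TP r = TP (HP (r \<otimes> g) \<otimes> (u \<otimes> inv g))" by simp
  also have "\<dots> = TP (u \<otimes> inv g)" by (rule TP_left[OF HP_in[OF rg]]) (use u g Tc in blast)
  finally have "TP r = TP (u \<otimes> inv g)" .
  then show "r = TP (u \<otimes> inv g)" using TP_T[OF r] by simp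
next
  assume e: "r = TP (u \<otimes> inv g)"
  have ug: "u \<otimes> inv g \<in> carrier G" using u g Tc by blast
  have "TP (r \<otimes> g) = TP (u \<otimes> inv g \<otimes> g)" unfolding e by (rule TP_mult[OF ug g])
  also have "\<dots> = TP u" using u g Tc by (simp add: m_assoc)
  also have "\<dots> = u" by (rule TP_T[OF u])
  finally show "u = TP (r \<otimes> g)" by simp
qed

definition Inv :: "('a \<Rightarrow> 'a \<Rightarrow> complex) \<Rightarrow> bool" where
  "Inv Xm \<longleftrightarrow> (\<forall>g\<in>carrier G. \<forall>s\<in>T. \<forall>w\<in>T.
     chi (HP (s \<otimes> g)) * Xm (TP (s \<otimes> g)) (TP (w \<otimes> g)) = Xm s w * chi (HP (w \<otimes> g)))"

lemma sum_left:
  assumes g: "g \<in> carrier G" and s: "s \<in> T" and u: "u \<in> T"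
  shows "(\<Sum>r\<in>T. Xm s r * rho G H chi g r u) = Xm s (TP (u \<otimes> inv g)) * chi (HP (TP (u \<otimes> inv g) \<otimes> g))"
proof -
  have "(\<Sum>r\<in>T. Xm s r * rho G H chi g r u) =
        (\<Sum>r\<in>T. if r = TP (u \<otimes> inv g) then Xm s r * chi (HP (r \<otimes> g)) else 0)"
  proof (rule sum.cong)
    fix r assume r: "r \<in> T"
    show "Xm s r * rho G H chi g r u = (if r = TP (u \<otimes> inv g) then Xm s r * chi (HP (r \<otimes> g)) else 0)"
      unfolding rho_val[OF r u g] col_unique[OF r u g] by simp
  qed simp
  also have "\<dots> = Xm s (TP (u \<otimes> inv g)) * chi (HP (TP (u \<otimes> inv g) \<otimes> g))"
    using T_fin TP_in u g Tc by simp
  finally show ?thesis .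
qed

lemma sum_right:
  assumes g: "g \<in> carrier G" and s: "s \<in> T" and u: "u \<in> T"
  shows "(\<Sum>r\<in>T. rho G H chi g s r * Xm r u) = chi (HP (s \<otimes> g)) * Xm (TP (s \<otimes> g)) u"
proof -
  have "(\<Sum>r\<in>T. rho G H chi g s r * Xm r u) =
        (\<Sum>r\<in>T. if r = TP (s \<otimes> g) then chi (HP (s \<otimes> g)) * Xm r u else 0)"
  proof (rule sum.cong)
    fix r assume r: "r \<in> T"
    show "rho G H chi g s r * Xm r u = (if r = TP (s \<otimes> g) then chi (HP (s \<otimes> g)) * Xm r u else 0)"
      unfolding rho_val[OF s r g] by simp
  qed simp
  also have "\<dots> = chi (HP (s \<otimes> g)) * Xm (TP (s \<otimes> g)) u"
    using T_fin TP_in s g Tc by simp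
  finally show ?thesis .
qed

lemma cent_iff:
  "Xm \<in> centraliser G H T chi \<longleftrightarrow> (\<forall>s u. (s, u) \<notin> T \<times> T \<longrightarrow> Xm s u = 0) \<and> Inv Xm"
proof -
  have "(\<forall>g\<in>carrier G. \<forall>s\<in>T. \<forall>u\<in>T.
        (\<Sum>r\<in>T. Xm s r * rho G H chi g r u) = (\<Sum>r\<in>T. rho G H chi g s r * Xm r u)) \<longleftrightarrow> Inv Xm"
  proof
    assume A: "\<forall>g\<in>carrier G. \<forall>s\<in>T. \<forall>u\<in>T.
        (\<Sum>r\<in>T. Xm s r * rho G H chi g r u) = (\<Sum>r\<in>T. rho G H chi g s r * Xm r u)"
    show "Inv Xm" unfolding Inv_def
    proof (intro ballI)
      fix g s w assume g: "g \<in> carrier G" and s: "s \<in> T" and w: "w \<in> T"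
      define u where "u = TP (w \<otimes> g)"
      have wg: "w \<otimes> g \<in> carrier G" using w g Tc by blast
      have u: "u \<in> T" unfolding u_def by (rule TP_in[OF wg])
      have wu: "TP (u \<otimes> inv g) = w" using col_unique[OF w u g] u_def by simp
      have "Xm s w * chi (HP (w \<otimes> g)) = chi (HP (s \<otimes> g)) * Xm (TP (s \<otimes> g)) u"
        using A[rule_format, OF g s u] unfolding sum_left[OF g s u] sum_right[OF g s u] wu .
      then show "chi (HP (s \<otimes> g)) * Xm (TP (s \<otimes> g)) (TP (w \<otimes> g)) = Xm s w * chi (HP (w \<otimes> g))"
        unfolding u_def by (rule sym)
    qed
  next
    assume I: "Inv Xm"
    show "\<forall>g\<in>carrier G. \<forall>s\<in>T. \<forall>u\<in>T.
        (\<Sum>r\<in>T. Xm s r * rho G H chi g r u) = (\<Sum>r\<in>T. rho G H chi g s r * Xm r u)"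
    proof (intro ballI)
      fix g s u assume g: "g \<in> carrier G" and s: "s \<in> T" and u: "u \<in> T"
      define w where "w = TP (u \<otimes> inv g)"
      have ug: "u \<otimes> inv g \<in> carrier G" using u g Tc by blast
      have w: "w \<in> T" unfolding w_def by (rule TP_in[OF ug])
      have wu: "TP (w \<otimes> g) = u" using col_unique[OF w u g] w_def by simp
      have e: "chi (HP (s \<otimes> g)) * Xm (TP (s \<otimes> g)) u = Xm s w * chi (HP (w \<otimes> g))"
        using I[unfolded Inv_def, rule_format, OF g s w] unfolding wu .
      show "(\<Sum>r\<in>T. Xm s r * rho G H chi g r u) = (\<Sum>r\<in>T. rho G H chi g s r * Xm r u)"
        unfolding sum_left[OF g s u] sum_right[OF g s u] w_def[symmetric] using e by (rule sym)
    qed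
  qed
  then show ?thesis unfolding centraliser_def by blast
qed

end



context tsetup
begin

abbreviation "oact \<equiv> orbital_act G H T"

lemma oact_pair: "oact (a, b) g = (TP (a \<otimes> g), TP (b \<otimes> g))"
  by (simp add: orbital_act_def)

lemma oact_in: assumes p: "p \<in> T \<times> T" and g: "g \<in> carrier G" shows "oact p g \<in> T \<times> T"
proof -
  obtain a b where ab: "p = (a, b)" "a \<in> T" "b \<in> T" using p by blast
  have 1: "a \<otimes> g \<in> carrier G" using ab g Tc by blast
  have 2: "b \<otimes> g \<in> carrier G" using ab g Tc by blast
  show ?thesis unfolding ab(1) oact_pair using TP_in[OF 1] TP_in[OF 2] by blast
qed

lemma oact_mult: assumes p: "p \<in> T \<times> T" and g: "g \<in> carrier G" and k: "k \<in> carrier G"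
  shows "oact (oact p g) k = oact p (g \<otimes> k)"
proof -
  obtain a b where ab: "p = (a, b)" "a \<in> T" "b \<in> T" using p by blast
  have 1: "a \<otimes> g \<in> carrier G" using ab g Tc by blast
  have 2: "b \<otimes> g \<in> carrier G" using ab g Tc by blast
  have "TP (TP (a \<otimes> g) \<otimes> k) = TP (a \<otimes> (g \<otimes> k))"
    unfolding TP_mult[OF 1 k] using ab g k Tc by (simp add: m_assoc)
  moreover have "TP (TP (b \<otimes> g) \<otimes> k) = TP (b \<otimes> (g \<otimes> k))"
    unfolding TP_mult[OF 2 k] using ab g k Tc by (simp add: m_assoc)
  ultimately show ?thesis unfolding ab(1) oact_pair by simp
qed

lemma oact_one: assumes p: "p \<in> T \<times> T" shows "oact p \<one> = p"
proof -
  obtain a b where ab: "p = (a, b)" "a \<in> T" "b \<in> T" using p by blast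
  have "TP (a \<otimes> \<one>) = a" using ab TP_T Tc by simp
  moreover have "TP (b \<otimes> \<one>) = b" using ab TP_T Tc by simp
  ultimately show ?thesis unfolding ab(1) oact_pair by simp
qed

lemma orb_eq: assumes p: "p \<in> T \<times> T" and q: "q \<in> oact p ` carrier G"
  shows "oact q ` carrier G = oact p ` carrier G"
proof -
  obtain g where g: "g \<in> carrier G" and qg: "q = oact p g" using q by blast
  have qT: "q \<in> T \<times> T" unfolding qg by (rule oact_in[OF p g])
  show ?thesis
  proof
    show "oact q ` carrier G \<subseteq> oact p ` carrier G"
    proof
      fix r assume "r \<in> oact q ` carrier G"
      then obtain k where k: "k \<in> carrier G" and rk: "r = oact q k" by blast
      have "r = oact p (g \<otimes> k)" unfolding rk qg by (rule oact_mult[OF p g k])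
      moreover have "g \<otimes> k \<in> carrier G" using g k by blast
      ultimately show "r \<in> oact p ` carrier G" by blast
    qed
  next
    show "oact p ` carrier G \<subseteq> oact q ` carrier G"
    proof
      fix r assume "r \<in> oact p ` carrier G"
      then obtain k where k: "k \<in> carrier G" and rk: "r = oact p k" by blast
      have ik: "inv g \<otimes> k \<in> carrier G" using g k by blast
      have "oact q (inv g \<otimes> k) = oact p (g \<otimes> (inv g \<otimes> k))" unfolding qg by (rule oact_mult[OF p g ik])
      also have "g \<otimes> (inv g \<otimes> k) = k" using g k by (simp add: m_assoc[symmetric])
      finally have "r = oact q (inv g \<otimes> k)" using rk by simp
      then show "r \<in> oact q ` carrier G" using ik by blast
    qed
  qed
qed

lemma orbitals_iff: "Ob \<in> orbitals G H T \<longleftrightarrow> (\<exists>p\<in>T \<times> T. Ob = oact p ` carrier G)"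
  unfolding orbitals_def by auto

lemma orbital_self: assumes Ob: "Ob \<in> orbitals G H T" and q: "q \<in> Ob"
  shows "q \<in> T \<times> T \<and> Ob = oact q ` carrier G"
proof -
  obtain p where p: "p \<in> T \<times> T" and Op: "Ob = oact p ` carrier G" using Ob orbitals_iff by blast
  have q': "q \<in> oact p ` carrier G" using q Op by simp
  then obtain g where g: "g \<in> carrier G" "q = oact p g" by blast
  have "q \<in> T \<times> T" unfolding g(2) by (rule oact_in[OF p g(1)])
  then show ?thesis using orb_eq[OF p q'] Op by simp
qed

lemma orbital_sub: assumes Ob: "Ob \<in> orbitals G H T" shows "Ob \<subseteq> T \<times> T"
  using orbital_self[OF Ob] by blast

lemma orbital_disj: assumes "Ob \<in> orbitals G H T" "Ob' \<in> orbitals G H T" "q \<in> Ob" "q \<in> Ob'"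
  shows "Ob = Ob'"
  using orbital_self[OF assms(1,3)] orbital_self[OF assms(2,4)] by simp

lemma orbital_closed: assumes Ob: "Ob \<in> orbitals G H T" and q: "q \<in> Ob" and k: "k \<in> carrier G"
  shows "oact q k \<in> Ob"
proof -
  have "Ob = oact q ` carrier G" using orbital_self[OF Ob q] by blast
  then show ?thesis using k by blast
qed

lemma orbitals_fin: "finite (orbitals G H T)"
proof -
  have "orbitals G H T = (\<lambda>p. oact p ` carrier G) ` (T \<times> T)" unfolding orbitals_def by auto
  then show ?thesis using T_fin by simp
qed

lemma orbit_1t: assumes Ob: "Ob \<in> orbitals G H T" and t: "(\<one>, t) \<in> Ob"
  shows "t \<in> T \<and> Ob = {(TP x, TP (t \<otimes> x)) | x. x \<in> carrier G}"
proof -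
  have s: "(\<one>, t) \<in> T \<times> T \<and> Ob = oact (\<one>, t) ` carrier G" by (rule orbital_self[OF Ob t])
  have "oact (\<one>, t) ` carrier G = {(TP x, TP (t \<otimes> x)) | x. x \<in> carrier G}"
    unfolding oact_pair by auto
  then show ?thesis using s by simp
qed

lemma orbit_1t_mem: assumes Ob: "Ob \<in> orbitals G H T" and t: "(\<one>, t) \<in> Ob" and x: "x \<in> carrier G"
  shows "(TP x, TP (t \<otimes> x)) \<in> Ob"
  using orbit_1t[OF Ob t] x by blast

lemma orbit_1t_ex: assumes Ob: "Ob \<in> orbitals G H T" and t: "(\<one>, t) \<in> Ob" and su: "(s, u) \<in> Ob"
  shows "\<exists>x\<in>carrier G. s = TP x \<and> u = TP (t \<otimes> x)"
  using orbit_1t[OF Ob t] su by blast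

definition fv :: "'a \<Rightarrow> 'a \<Rightarrow> complex" where
  "fv t x = inverse (chi (HP x)) * chi (HP (t \<otimes> x))"

lemma coset_iff:
  assumes u: "u \<in> T" and v: "v \<in> T" and t: "t \<in> carrier G"
  shows "x \<in> r_coset G H u \<inter> l_coset G (inv t) (r_coset G H v) \<longleftrightarrow>
         x \<in> carrier G \<and> TP x = u \<and> TP (t \<otimes> x) = v"
proof
  assume a: "x \<in> r_coset G H u \<inter> l_coset G (inv t) (r_coset G H v)"
  then obtain h where h: "h \<in> H" "x = h \<otimes> u" unfolding r_coset_def by blast
  have xc: "x \<in> carrier G" using h u Hc Tc by simp
  have 1: "TP x = u" by (rule TP_eq[OF h(1) u h(2)])
  obtain y where y: "y \<in> r_coset G H v" "x = inv t \<otimes> y" using a unfolding l_coset_def by blast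
  obtain h' where h': "h' \<in> H" "y = h' \<otimes> v" using y(1) unfolding r_coset_def by blast
  have yc: "y \<in> carrier G" using h' v Hc Tc by simp
  have "t \<otimes> x = y" using y(2) t yc by (simp add: m_assoc[symmetric])
  then have "t \<otimes> x = h' \<otimes> v" using h'(2) by simp
  then have 2: "TP (t \<otimes> x) = v" by (rule TP_eq[OF h'(1) v])
  show "x \<in> carrier G \<and> TP x = u \<and> TP (t \<otimes> x) = v" using xc 1 2 by blast
next
  assume a: "x \<in> carrier G \<and> TP x = u \<and> TP (t \<otimes> x) = v"
  have xc: "x \<in> carrier G" using a by blast
  have tx: "t \<otimes> x \<in> carrier G" using xc t by blast
  have "x = HP x \<otimes> TP x" by (rule decomp[OF xc])
  then have "x = HP x \<otimes> u" using a by simp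
  then have 1: "x \<in> r_coset G H u" unfolding r_coset_def using HP_in[OF xc] by blast
  have "t \<otimes> x = HP (t \<otimes> x) \<otimes> TP (t \<otimes> x)" by (rule decomp[OF tx])
  then have "t \<otimes> x = HP (t \<otimes> x) \<otimes> v" using a by simp
  then have 2: "t \<otimes> x \<in> r_coset G H v" unfolding r_coset_def using HP_in[OF tx] by blast
  have "x = inv t \<otimes> (t \<otimes> x)" using xc t by (simp add: m_assoc[symmetric])
  then have 3: "x \<in> l_coset G (inv t) (r_coset G H v)" unfolding l_coset_def using 2 by blast
  show "x \<in> r_coset G H u \<inter> l_coset G (inv t) (r_coset G H v)" using 1 3 by blast
qed

lemma orient_iff:
  assumes Ob: "Ob \<in> orbitals G H T" and t1: "(\<one>, t) \<in> Ob"
  shows "orientable G H T chi Ob t \<longleftrightarrow>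
    (\<forall>x\<in>carrier G. \<forall>y\<in>carrier G. TP x = TP y \<longrightarrow> TP (t \<otimes> x) = TP (t \<otimes> y) \<longrightarrow> fv t x = fv t y)"
proof -
  have tT: "t \<in> T" using orbit_1t[OF Ob t1] by blast
  have tc: "t \<in> carrier G" using tT Tc by blast
  have OT: "Ob \<subseteq> T \<times> T" by (rule orbital_sub[OF Ob])
  show ?thesis
  proof
    assume A: "orientable G H T chi Ob t"
    show "\<forall>x\<in>carrier G. \<forall>y\<in>carrier G. TP x = TP y \<longrightarrow> TP (t \<otimes> x) = TP (t \<otimes> y) \<longrightarrow> fv t x = fv t y"
    proof (intro ballI impI)
      fix x y assume x: "x \<in> carrier G" and y: "y \<in> carrier G" and e1: "TP x = TP y"
        and e2: "TP (t \<otimes> x) = TP (t \<otimes> y)"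
      have m: "(TP x, TP (t \<otimes> x)) \<in> Ob" by (rule orbit_1t_mem[OF Ob t1 x])
      have uT: "TP x \<in> T" using TP_in[OF x] .
      have vT: "TP (t \<otimes> x) \<in> T" using TP_in tc x by blast
      have xi: "x \<in> r_coset G H (TP x) \<inter> l_coset G (inv t) (r_coset G H (TP (t \<otimes> x)))"
        using coset_iff[OF uT vT tc] x by blast
      have yi: "y \<in> r_coset G H (TP x) \<inter> l_coset G (inv t) (r_coset G H (TP (t \<otimes> x)))"
        using coset_iff[OF uT vT tc] y e1 e2 by simp
      have "inverse (chi_H G H T chi x) * chi_H G H T chi (t \<otimes> x)
          = inverse (chi_H G H T chi y) * chi_H G H T chi (t \<otimes> y)"
        using A m xi yi unfolding orientable_def by fast
      then show "fv t x = fv t y" unfolding fv_def chi_H_def .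
    qed
  next
    assume B: "\<forall>x\<in>carrier G. \<forall>y\<in>carrier G. TP x = TP y \<longrightarrow> TP (t \<otimes> x) = TP (t \<otimes> y) \<longrightarrow> fv t x = fv t y"
    show "orientable G H T chi Ob t" unfolding orientable_def
    proof (rule ballI)
      fix p assume p: "p \<in> Ob"
      obtain u v where puv: "p = (u, v)" by (cases p)
      have uv: "(u, v) \<in> Ob" using p puv by simp
      have uT: "u \<in> T" and vT: "v \<in> T" using uv OT by auto
      have R: "inverse (chi_H G H T chi g) * chi_H G H T chi (t \<otimes> g)
          = inverse (chi_H G H T chi k) * chi_H G H T chi (t \<otimes> k)"
        if g: "g \<in> r_coset G H u \<inter> l_coset G (inv t) (r_coset G H v)"
        and k: "k \<in> r_coset G H u \<inter> l_coset G (inv t) (r_coset G H v)" for g k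
      proof -
        have g': "g \<in> carrier G \<and> TP g = u \<and> TP (t \<otimes> g) = v" using coset_iff[OF uT vT tc] g by blast
        have k': "k \<in> carrier G \<and> TP k = u \<and> TP (t \<otimes> k) = v" using coset_iff[OF uT vT tc] k by blast
        have "fv t g = fv t k" using B g' k' by simp
        then show ?thesis unfolding fv_def chi_H_def .
      qed
      show "case p of (u, v) \<Rightarrow> \<forall>g\<in>r_coset G H u \<inter> l_coset G (inv t) (r_coset G H v).
        \<forall>k\<in>r_coset G H u \<inter> l_coset G (inv t) (r_coset G H v).
          inverse (chi_H G H T chi g) * chi_H G H T chi (t \<otimes> g)
        = inverse (chi_H G H T chi k) * chi_H G H T chi (t \<otimes> k)"
        unfolding puv prod.case using R by blast
    qed
  qed
qed

end



context tsetup
begin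

lemma fv_nz: assumes x: "x \<in> carrier G" and t: "t \<in> T" shows "fv t x \<noteq> 0"
proof -
  have tx: "t \<otimes> x \<in> carrier G" using t x Tc by blast
  show ?thesis unfolding fv_def using chi_nz[OF HP_in[OF x]] chi_nz[OF HP_in[OF tx]] by simp
qed

lemma fv_one: assumes t: "t \<in> T" shows "fv t \<one> = 1"
proof -
  have 1: "HP \<one> = \<one>" by (rule HP_T[OF oneT])
  have 2: "HP (t \<otimes> \<one>) = \<one>" using HP_T[OF t] t Tc by simp
  show ?thesis unfolding fv_def 1 2 chi_one by simp
qed

lemma fv_mult: assumes x: "x \<in> carrier G" and g: "g \<in> carrier G" and t: "t \<in> T"
  shows "chi (HP (TP x \<otimes> g)) * fv t (x \<otimes> g) = fv t x * chi (HP (TP (t \<otimes> x) \<otimes> g))"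
proof -
  have tx: "t \<otimes> x \<in> carrier G" using t x Tc by blast
  have xg: "x \<otimes> g \<in> carrier G" using x g by blast
  have txg: "TP (t \<otimes> x) \<otimes> g \<in> carrier G" using tx g TPc by blast
  have tx_g: "TP x \<otimes> g \<in> carrier G" using x g TPc by blast
  have e1: "chi (HP (x \<otimes> g)) = chi (HP x) * chi (HP (TP x \<otimes> g))" by (rule chiHP_mult[OF x g])
  have "t \<otimes> (x \<otimes> g) = t \<otimes> x \<otimes> g" using t x g Tc by (simp add: m_assoc)
  then have e2: "chi (HP (t \<otimes> (x \<otimes> g))) = chi (HP (t \<otimes> x)) * chi (HP (TP (t \<otimes> x) \<otimes> g))"
    using chiHP_mult[OF tx g] by simp
  have a: "chi (HP x) \<noteq> 0" by (rule chi_nz[OF HP_in[OF x]])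
  have b: "chi (HP (TP x \<otimes> g)) \<noteq> 0" by (rule chi_nz[OF HP_in[OF tx_g]])
  show ?thesis unfolding fv_def e1 e2 using a b by (simp add: field_simps)
qed

lemma M_zero: "(s, u) \<notin> Ob \<Longrightarrow> orbital_matrix G H T chi Ob t s u = 0"
  unfolding orbital_matrix_def by simp

lemma M_val:
  assumes Ob: "Ob \<in> orbitals G H T" and t1: "(\<one>, t) \<in> Ob" and or: "orientable G H T chi Ob t"
    and x: "x \<in> carrier G"
  shows "orbital_matrix G H T chi Ob t (TP x) (TP (t \<otimes> x)) = fv t x"
proof -
  have m: "(TP x, TP (t \<otimes> x)) \<in> Ob" by (rule orbit_1t_mem[OF Ob t1 x])
  define P where "P = (\<lambda>g. g \<in> carrier G \<and> TP g = TP x \<and> TP (t \<otimes> g) = TP (t \<otimes> x))"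
  define g0 where "g0 = (SOME g. P g)"
  have Px: "P x" unfolding P_def using x by simp
  have Pg0: "P g0" unfolding g0_def by (rule someI[of P, OF Px])
  have B: "\<forall>x\<in>carrier G. \<forall>y\<in>carrier G. TP x = TP y \<longrightarrow> TP (t \<otimes> x) = TP (t \<otimes> y) \<longrightarrow> fv t x = fv t y"
    using or orient_iff[OF Ob t1] by blast
  have "fv t g0 = fv t x" using B Pg0 x unfolding P_def by blast
  moreover have "orbital_matrix G H T chi Ob t (TP x) (TP (t \<otimes> x)) = fv t g0"
    unfolding orbital_matrix_def Let_def fv_def chi_H_def g0_def P_def using m by simp
  ultimately show ?thesis by simp
qed

lemma Inv_M:
  assumes Ob: "Ob \<in> orbitals G H T" and t1: "(\<one>, t) \<in> Ob" and or: "orientable G H T chi Ob t"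
  shows "Inv (orbital_matrix G H T chi Ob t)"
  unfolding Inv_def
proof (intro ballI)
  fix g s w assume g: "g \<in> carrier G" and s: "s \<in> T" and w: "w \<in> T"
  have tT: "t \<in> T" using orbit_1t[OF Ob t1] by blast
  let ?M = "orbital_matrix G H T chi Ob t"
  show "chi (HP (s \<otimes> g)) * ?M (TP (s \<otimes> g)) (TP (w \<otimes> g)) = ?M s w * chi (HP (w \<otimes> g))"
  proof (cases "(s, w) \<in> Ob")
    case True
    obtain x where x: "x \<in> carrier G" and sx: "s = TP x" and wx: "w = TP (t \<otimes> x)"
      using orbit_1t_ex[OF Ob t1 True] by blast
    have tx: "t \<otimes> x \<in> carrier G" using tT x Tc by blast
    have xg: "x \<otimes> g \<in> carrier G" using x g by blast
    have 1: "TP (s \<otimes> g) = TP (x \<otimes> g)" unfolding sx by (rule TP_mult[OF x g])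
    have "TP (w \<otimes> g) = TP (t \<otimes> x \<otimes> g)" unfolding wx by (rule TP_mult[OF tx g])
    also have "\<dots> = TP (t \<otimes> (x \<otimes> g))" using tT x g Tc by (simp add: m_assoc)
    finally have 2: "TP (w \<otimes> g) = TP (t \<otimes> (x \<otimes> g))" .
    have 3: "?M (TP (s \<otimes> g)) (TP (w \<otimes> g)) = fv t (x \<otimes> g)"
      unfolding 1 2 by (rule M_val[OF Ob t1 or xg])
    have 4: "?M s w = fv t x" unfolding sx wx by (rule M_val[OF Ob t1 or x])
    show ?thesis unfolding 3 4 using fv_mult[OF x g tT] unfolding sx wx .
  next
    case False
    have "(TP (s \<otimes> g), TP (w \<otimes> g)) \<notin> Ob"
    proof
      assume a: "(TP (s \<otimes> g), TP (w \<otimes> g)) \<in> Ob"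
      have sw: "(s, w) \<in> T \<times> T" using s w by blast
      have "oact (s, w) g \<in> Ob" using a oact_pair by simp
      then have "oact (oact (s, w) g) (inv g) \<in> Ob" using orbital_closed[OF Ob] g by blast
      moreover have "oact (oact (s, w) g) (inv g) = (s, w)"
        using oact_mult[OF sw g] oact_one[OF sw] g by simp
      ultimately show False using False by simp
    qed
    then show ?thesis using M_zero False by simp
  qed
qed

lemma single_orbit:
  assumes SO: "S \<subseteq> orbitals G H T" and Ob0: "Ob0 \<in> orbitals G H T" and su: "(s, u) \<in> Ob0"
  shows "(\<Sum>Ob\<in>S. c Ob * orbital_matrix G H T chi Ob (tt Ob) s u)
       = (if Ob0 \<in> S then c Ob0 * orbital_matrix G H T chi Ob0 (tt Ob0) s u else 0)"
proof -
  have fS: "finite S" using SO orbitals_fin finite_subset by blast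
  have "(\<Sum>Ob\<in>S. c Ob * orbital_matrix G H T chi Ob (tt Ob) s u)
       = (\<Sum>Ob\<in>S. if Ob = Ob0 then c Ob * orbital_matrix G H T chi Ob (tt Ob) s u else 0)"
  proof (rule sum.cong)
    fix Ob assume ObS: "Ob \<in> S"
    show "c Ob * orbital_matrix G H T chi Ob (tt Ob) s u
       = (if Ob = Ob0 then c Ob * orbital_matrix G H T chi Ob (tt Ob) s u else 0)"
    proof (cases "Ob = Ob0")
      case False
      have "(s, u) \<notin> Ob"
      proof
        assume "(s, u) \<in> Ob"
        then have "Ob = Ob0" using orbital_disj[OF _ Ob0 _ su] ObS SO by blast
        then show False using False by simp
      qed
      then show ?thesis using False M_zero by simp
    qed simp
  qed simp
  also have "\<dots> = (if Ob0 \<in> S then c Ob0 * orbital_matrix G H T chi Ob0 (tt Ob0) s u else 0)"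
    using fS by simp
  finally show ?thesis .
qed

end



context tsetup
begin

lemma main:
  fixes tO :: "('a \<times> 'a) set \<Rightarrow> 'a" and S and M
  assumes tO: "\<forall>Ob\<in>orbitals G H T. (\<one>, tO Ob) \<in> Ob"
    and S_def: "S = {Ob \<in> orbitals G H T. orientable G H T chi Ob (tO Ob)}"
    and M_def: "M = (\<lambda>Ob. orbital_matrix G H T chi Ob (tO Ob))"
  shows "(\<forall>c :: ('a \<times> 'a) set \<Rightarrow> complex.
            (\<forall>s u. (\<Sum>Ob\<in>S. c Ob * M Ob s u) = 0) \<longrightarrow> (\<forall>Ob\<in>S. c Ob = 0))
       \<and> centraliser G H T chi = {(\<lambda>s u. \<Sum>Ob\<in>S. c Ob * M Ob s u) | c. True}"
proof -
  have SO: "S \<subseteq> orbitals G H T" unfolding S_def by blast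
  have fS: "finite S" using SO orbitals_fin finite_subset by blast
  have SD: "Ob \<in> orbitals G H T \<and> orientable G H T chi Ob (tO Ob)" if "Ob \<in> S" for Ob
    using that unfolding S_def by blast
  have single: "(\<Sum>Ob\<in>S. c Ob * M Ob s u) = (if Ob0 \<in> S then c Ob0 * M Ob0 s u else 0)"
    if "Ob0 \<in> orbitals G H T" "(s, u) \<in> Ob0" for c Ob0 s u
    unfolding M_def by (rule single_orbit[OF SO that])
  have M1: "M Ob \<one> (tO Ob) = 1" if "Ob \<in> S" for Ob
  proof -
    have Ob: "Ob \<in> orbitals G H T" and or: "orientable G H T chi Ob (tO Ob)" using SD[OF that] by auto
    have t1: "(\<one>, tO Ob) \<in> Ob" using tO Ob by blast
    have tT: "tO Ob \<in> T" using orbit_1t[OF Ob t1] by blast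
    have a: "TP \<one> = \<one>" by (rule TP_T[OF oneT])
    have b: "TP (tO Ob \<otimes> \<one>) = tO Ob" using TP_T[OF tT] tT Tc by simp
    show ?thesis using M_val[OF Ob t1 or one_closed] unfolding a b fv_one[OF tT] M_def by simp
  qed
  have part1: "\<forall>c :: ('a \<times> 'a) set \<Rightarrow> complex.
            (\<forall>s u. (\<Sum>Ob\<in>S. c Ob * M Ob s u) = 0) \<longrightarrow> (\<forall>Ob\<in>S. c Ob = 0)"
  proof (intro allI impI ballI)
    fix c :: "('a \<times> 'a) set \<Rightarrow> complex" and Ob0
    assume Z: "\<forall>s u. (\<Sum>Ob\<in>S. c Ob * M Ob s u) = 0" and Ob0: "Ob0 \<in> S"
    have O0: "Ob0 \<in> orbitals G H T" using SD[OF Ob0] by blast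
    have t1: "(\<one>, tO Ob0) \<in> Ob0" using tO O0 by blast
    have "(\<Sum>Ob\<in>S. c Ob * M Ob \<one> (tO Ob0)) = c Ob0 * M Ob0 \<one> (tO Ob0)"
      using single[OF O0 t1] Ob0 by simp
    then show "c Ob0 = 0" using Z M1[OF Ob0] by simp
  qed
  have sub1: "(\<lambda>s u. \<Sum>Ob\<in>S. c Ob * M Ob s u) \<in> centraliser G H T chi" for c
    unfolding cent_iff
  proof (intro conjI allI impI)
    fix s u assume nsu: "(s, u) \<notin> T \<times> T"
    have "c Ob * M Ob s u = 0" if "Ob \<in> S" for Ob
    proof -
      have "(s, u) \<notin> Ob" using orbital_sub[of Ob] SO that nsu by blast
      then show ?thesis unfolding M_def using M_zero by simp
    qed
    then show "(\<Sum>Ob\<in>S. c Ob * M Ob s u) = 0" by (intro sum.neutral) blast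
  next
    show "Inv (\<lambda>s u. \<Sum>Ob\<in>S. c Ob * M Ob s u)" unfolding Inv_def
    proof (intro ballI)
      fix g s w assume g: "g \<in> carrier G" and s: "s \<in> T" and w: "w \<in> T"
      have IM: "chi (HP (s \<otimes> g)) * M Ob (TP (s \<otimes> g)) (TP (w \<otimes> g)) = M Ob s w * chi (HP (w \<otimes> g))"
        if "Ob \<in> S" for Ob
      proof -
        have Ob: "Ob \<in> orbitals G H T" and or: "orientable G H T chi Ob (tO Ob)" using SD[OF that] by auto
        have t1: "(\<one>, tO Ob) \<in> Ob" using tO Ob by blast
        show ?thesis using Inv_M[OF Ob t1 or] g s w unfolding Inv_def M_def by blast
      qed
      have "chi (HP (s \<otimes> g)) * (\<Sum>Ob\<in>S. c Ob * M Ob (TP (s \<otimes> g)) (TP (w \<otimes> g)))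
          = (\<Sum>Ob\<in>S. c Ob * (chi (HP (s \<otimes> g)) * M Ob (TP (s \<otimes> g)) (TP (w \<otimes> g))))"
        by (simp add: sum_distrib_left mult.left_commute)
      also have "\<dots> = (\<Sum>Ob\<in>S. c Ob * (M Ob s w * chi (HP (w \<otimes> g))))"
        using IM by simp
      also have "\<dots> = (\<Sum>Ob\<in>S. c Ob * M Ob s w) * chi (HP (w \<otimes> g))"
        by (simp add: sum_distrib_right mult.assoc)
      finally show "chi (HP (s \<otimes> g)) * (\<Sum>Ob\<in>S. c Ob * M Ob (TP (s \<otimes> g)) (TP (w \<otimes> g)))
          = (\<Sum>Ob\<in>S. c Ob * M Ob s w) * chi (HP (w \<otimes> g))" .
    qed
  qed
  have sub2: "Xm \<in> {(\<lambda>s u. \<Sum>Ob\<in>S. c Ob * M Ob s u) | c. True}" if X: "Xm \<in> centraliser G H T chi" for Xm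
  proof -
    have supp: "\<forall>s u. (s, u) \<notin> T \<times> T \<longrightarrow> Xm s u = 0" and I: "Inv Xm" using X cent_iff by auto
    define c where "c = (\<lambda>Ob. Xm \<one> (tO Ob))"
    have "Xm = (\<lambda>s u. \<Sum>Ob\<in>S. c Ob * M Ob s u)"
    proof (intro ext)
      fix s u
      show "Xm s u = (\<Sum>Ob\<in>S. c Ob * M Ob s u)"
      proof (cases "(s, u) \<in> T \<times> T")
        case False
        have "c Ob * M Ob s u = 0" if "Ob \<in> S" for Ob
        proof -
          have "(s, u) \<notin> Ob" using orbital_sub[of Ob] SO that False by blast
          then show ?thesis unfolding M_def using M_zero by simp
        qed
        then have "(\<Sum>Ob\<in>S. c Ob * M Ob s u) = 0" by (intro sum.neutral) blast
        then show ?thesis using supp False by simp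
      next
        case True
        define Ob0 where "Ob0 = oact (s, u) ` carrier G"
        have O0: "Ob0 \<in> orbitals G H T" unfolding Ob0_def orbitals_iff using True by blast
        have su: "(s, u) \<in> Ob0" unfolding Ob0_def using oact_one[OF True, symmetric] one_closed by blast
        define t0 where "t0 = tO Ob0"
        have t1: "(\<one>, t0) \<in> Ob0" using tO O0 unfolding t0_def by blast
        have t0T: "t0 \<in> T" using orbit_1t[OF O0 t1] by blast
        have key: "Xm (TP y) (TP (t0 \<otimes> y)) = Xm \<one> t0 * fv t0 y" if y: "y \<in> carrier G" for y
        proof -
          have "chi (HP (\<one> \<otimes> y)) * Xm (TP (\<one> \<otimes> y)) (TP (t0 \<otimes> y)) = Xm \<one> t0 * chi (HP (t0 \<otimes> y))"
            using I[unfolded Inv_def, rule_format, OF y oneT t0T] .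
          then have e: "chi (HP y) * Xm (TP y) (TP (t0 \<otimes> y)) = Xm \<one> t0 * chi (HP (t0 \<otimes> y))"
            using y by simp
          have nz: "chi (HP y) \<noteq> 0" by (rule chi_nz[OF HP_in[OF y]])
          show ?thesis unfolding fv_def using e nz by (simp add: field_simps)
        qed
        obtain x where x: "x \<in> carrier G" and sx: "s = TP x" and ux: "u = TP (t0 \<otimes> x)"
          using orbit_1t_ex[OF O0 t1 su] by blast
        have Xsu: "Xm s u = Xm \<one> t0 * fv t0 x" unfolding sx ux by (rule key[OF x])
        show ?thesis
        proof (cases "Ob0 \<in> S")
          case True
          have or: "orientable G H T chi Ob0 t0" using SD[OF True] unfolding t0_def by blast
          have "M Ob0 s u = fv t0 x" unfolding M_def sx ux t0_def[symmetric] by (rule M_val[OF O0 t1 or x])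
          then show ?thesis using single[OF O0 su] True Xsu unfolding c_def t0_def by simp
        next
          case False
          have nor: "\<not> orientable G H T chi Ob0 t0" using False O0 unfolding S_def t0_def by blast
          then obtain y z where y: "y \<in> carrier G" and z: "z \<in> carrier G" and yz1: "TP y = TP z"
            and yz2: "TP (t0 \<otimes> y) = TP (t0 \<otimes> z)" and ne: "fv t0 y \<noteq> fv t0 z"
            using orient_iff[OF O0 t1] by blast
          have a: "Xm (TP z) (TP (t0 \<otimes> z)) = Xm \<one> t0 * fv t0 y" using key[OF y] unfolding yz1 yz2 .
          have "Xm \<one> t0 * fv t0 y = Xm \<one> t0 * fv t0 z" using trans[OF a[symmetric] key[OF z]] .
          then have "Xm \<one> t0 = 0" using ne by simp
          then show ?thesis using single[OF O0 su] False Xsu by simp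
        qed
      qed
    qed
    then show ?thesis by blast
  qed
  show ?thesis using part1 sub1 sub2 by blast
qed

end


theorem theorem3p4:
  fixes G :: "('a, 'b) monoid_scheme" and H T :: "'a set" and chi :: "'a \<Rightarrow> complex"
    and tO :: "('a \<times> 'a) set \<Rightarrow> 'a"
  assumes "group G" and "finite (carrier G)" and "subgroup H G"
    and "right_transversal G H T" and "\<one>\<^bsub>G\<^esub> \<in> T"
    and "linear_character G H chi"
    and "\<forall>Orb\<in>orbitals G H T. (\<one>\<^bsub>G\<^esub>, tO Orb) \<in> Orb"
  defines "S \<equiv> {Orb \<in> orbitals G H T. orientable G H T chi Orb (tO Orb)}"
  defines "M \<equiv> \<lambda>Orb. orbital_matrix G H T chi Orb (tO Orb)"
  shows "(\<forall>c :: ('a \<times> 'a) set \<Rightarrow> complex.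
            (\<forall>s u. (\<Sum>Orb\<in>S. c Orb * M Orb s u) = 0) \<longrightarrow> (\<forall>Orb\<in>S. c Orb = 0))
       \<and> centraliser G H T chi = {(\<lambda>s u. \<Sum>Orb\<in>S. c Orb * M Orb s u) | c. True}"
proof -
  have ts: "tsetup G H T chi"
    unfolding tsetup_def tsetup_axioms_def using assms(1-6) by blast
  show ?thesis
    by (rule tsetup.main[OF ts assms(7) S_def[THEN meta_eq_to_obj_eq] M_def[THEN meta_eq_to_obj_eq]])
qed

end
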